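(* Let $a\in\mathbb{R}$, $b\in(a,\infty)$, $h\in\mathbb{N}$, $v_1,\dots,v_h,w_1,\dots,w_h\in(0,\infty)$, let $f,p\in C(\mathbb{R},\mathbb{R})$ satisfy for all $x\in\mathbb{R}$ that $p(x)\ge0$ and $p^{-1}((0,\infty))=(a,b)$, with $\mathcal{N}^\theta$, $\mathcal{L}$, $I_i^\theta$, $\operatorname{Lip}$ as in the context. Assume that $f$ is non-decreasing and satisfies $\operatorname{Lip}(f)<\min_{i\in\{1,\dots,h\}}v_iw_i$, let $\vartheta\in\mathbb{R}^{h+1}$ satisfy $(\nabla\mathcal{L})(\vartheta)=0$, and let $V=\sup_{x\in(a,b)}\sum_{i\in\{1,\dots,h\},\,x\in I_i^\vartheta}v_i$. Then $$\max\{\mathcal{N}^\vartheta(b)-f(b),\,f(a)-\mathcal{N}^\vartheta(a)\}\le V.$$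
   Context: Let $\mathfrak{c}(x)=\min\{\max\{x,0\},1\}$. For $F\in C(\mathbb{R},\mathbb{R})$ let $\operatorname{Lip}(F)=\sup_{x,y\in[a,b],x\ne y}\frac{|F(x)-F(y)|}{|x-y|}$. For $\theta=(\theta_1,\dots,\theta_{h+1})\in\mathbb{R}^{h+1}$ and $i\in\{1,\dots,h\}$ let $\psi_i(\theta)=-[w_i]^{-1}\theta_i$, $I_i^\theta=(\psi_i(\theta),\psi_i(\theta)+[w_i]^{-1})\cap(a,b)$, $\mathcal{N}^\theta(x)=\theta_{h+1}+\sum_{i=1}^hv_i\mathfrak{c}(w_ix+\theta_i)$, and $\mathcal{L}(\theta)=\int_a^b(\mathcal{N}^\theta(x)-f(x))^2p(x)\,\mathrm{d}x$ ($\mathcal{L}$ is continuously differentiable). *)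

theory Defs
  imports "HOL-Analysis.Analysis" "HOL-Library.Extended_Real"
begin

definition clip :: "real \<Rightarrow> real" where
  "clip x = min (max x 0) 1"

text \<open>Lipschitz constant of F on [a,b] (may be infinite, hence ereal).\<close>
definition Lip :: "real \<Rightarrow> real \<Rightarrow> (real \<Rightarrow> real) \<Rightarrow> ereal" where
  "Lip a b F = (SUP xy \<in> {(x, y). x \<in> {a..b} \<and> y \<in> {a..b} \<and> x \<noteq> y}.
       ereal (\<bar>F (fst xy) - F (snd xy)\<bar> / \<bar>fst xy - snd xy\<bar>))"

text \<open>Parameter vectors theta in R^(h+1) are functions nat => real, only
  the coordinates 1..h+1 are relevant.\<close>
definition psi :: "(nat \<Rightarrow> real) \<Rightarrow> (nat \<Rightarrow> real) \<Rightarrow> nat \<Rightarrow> real" where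
  "psi w \<theta> i = - (\<theta> i / w i)"

definition Iset :: "real \<Rightarrow> real \<Rightarrow> (nat \<Rightarrow> real) \<Rightarrow> (nat \<Rightarrow> real) \<Rightarrow> nat \<Rightarrow> real set" where
  "Iset a b w \<theta> i = {psi w \<theta> i <..< psi w \<theta> i + 1 / w i} \<inter> {a<..<b}"

definition NN :: "nat \<Rightarrow> (nat \<Rightarrow> real) \<Rightarrow> (nat \<Rightarrow> real) \<Rightarrow> (nat \<Rightarrow> real) \<Rightarrow> real \<Rightarrow> real" where
  "NN h v w \<theta> x = \<theta> (h + 1) + (\<Sum>i = 1..h. v i * clip (w i * x + \<theta> i))"

definition LL :: "real \<Rightarrow> real \<Rightarrow> nat \<Rightarrow> (nat \<Rightarrow> real) \<Rightarrow> (nat \<Rightarrow> real)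
    \<Rightarrow> (real \<Rightarrow> real) \<Rightarrow> (real \<Rightarrow> real) \<Rightarrow> (nat \<Rightarrow> real) \<Rightarrow> real" where
  "LL a b h v w f p \<theta> = integral {a..b} (\<lambda>x. (NN h v w \<theta> x - f x)\<^sup>2 * p x)"

definition grad_zero :: "nat \<Rightarrow> ((nat \<Rightarrow> real) \<Rightarrow> real) \<Rightarrow> (nat \<Rightarrow> real) \<Rightarrow> bool" where
  "grad_zero h L \<theta> \<longleftrightarrow>
     (\<forall>j \<in> {1..h+1}. ((\<lambda>t. L (\<theta>(j := t))) has_real_derivative 0) (at (\<theta> j)))"

end

theory Submission
  imports Defs
begin


lemma deriv_small:
  fixes \<phi> :: "real \<Rightarrow> real"
  assumes "(\<phi> has_real_derivative 0) (at t0)" "\<epsilon> > 0"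
  shows "\<exists>\<delta>>0. \<forall>y. y \<noteq> t0 \<and> \<bar>y - t0\<bar> < \<delta> \<longrightarrow> \<bar>\<phi> y - \<phi> t0\<bar> \<le> \<epsilon> * \<bar>y - t0\<bar>"
proof -
  have "((\<lambda>y. (\<phi> y - \<phi> t0) / (y - t0)) \<longlongrightarrow> 0) (at t0)"
    using assms(1) has_field_derivative_iff by blast
  then obtain \<delta> where d: "\<delta> > 0" "\<forall>y. y \<noteq> t0 \<and> norm (y - t0) < \<delta> \<longrightarrow> norm ((\<phi> y - \<phi> t0) / (y - t0) - 0) < \<epsilon>"
    using assms(2) unfolding LIM_eq by blast
  show ?thesis
  proof (intro exI[of _ \<delta>] conjI allI impI)
    fix y assume y: "y \<noteq> t0 \<and> \<bar>y - t0\<bar> < \<delta>"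
    then have "\<bar>(\<phi> y - \<phi> t0) / (y - t0)\<bar> < \<epsilon>" using d by auto
    moreover have "\<bar>y - t0\<bar> > 0" using y by auto
    ultimately show "\<bar>\<phi> y - \<phi> t0\<bar> \<le> \<epsilon> * \<bar>y - t0\<bar>"
      by (simp add: abs_divide pos_divide_less_eq)
  qed (use d in auto)
qed

lemma core:
  fixes \<phi> g p :: "real \<Rightarrow> real" and D :: "real \<Rightarrow> real \<Rightarrow> real"
  assumes ab: "a < b"
    and gc: "continuous_on {a..b} g" and pc: "continuous_on {a..b} p"
    and pn: "\<forall>x\<in>{a..b}. p x \<ge> 0"
    and der: "(\<phi> has_real_derivative 0) (at t0)"
    and sig: "\<bar>\<sigma>\<bar> = 1" and s0: "s0 > 0"
    and Dc: "\<forall>s\<in>{0<..<s0}. continuous_on {a..b} (D s)"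
    and phis: "\<forall>s\<in>{0<..<s0}. \<phi> (t0 + \<sigma> * s) = integral {a..b} (\<lambda>x. (g x + D s x)\<^sup>2 * p x)"
    and phi0: "\<phi> t0 = integral {a..b} (\<lambda>x. (g x)\<^sup>2 * p x)"
    and Db: "\<forall>s\<in>{0<..<s0}. \<forall>x\<in>{a..b}. \<bar>D s x\<bar> \<le> C * s"
    and sgn: "\<forall>s\<in>{0<..<s0}. \<forall>x\<in>{a..b}. g x * D s x * p x \<le> 0"
    and k: "k1 < k2" "{k1..k2} \<subseteq> {a..b}" and m: "m > 0"
    and kb: "\<forall>s\<in>{0<..<s0}. \<forall>x\<in>{k1..k2}. g x * D s x * p x \<le> - m * s"
  shows False
proof -
  define P where "P = integral {a..b} p"
  define L where "L = k2 - k1"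
  have L: "L > 0" using k unfolding L_def by auto
  have P: "P \<ge> 0" unfolding P_def
    by (rule integral_nonneg) (use pc pn integrable_continuous_interval in auto)
  have key: "\<phi> (t0 + \<sigma> * s) - \<phi> t0 \<le> - 2 * m * s * L + C\<^sup>2 * s\<^sup>2 * P" if s: "s \<in> {0<..<s0}" for s
  proof -
    have Dcs: "continuous_on {a..b} (D s)" using Dc s by auto
    have i1: "(\<lambda>x. (g x + D s x)\<^sup>2 * p x) integrable_on {a..b}"
      by (intro integrable_continuous_interval continuous_intros gc pc Dcs)
    have i2: "(\<lambda>x. (g x)\<^sup>2 * p x) integrable_on {a..b}"
      by (intro integrable_continuous_interval continuous_intros gc pc Dcs)
    have i3: "(\<lambda>x. 2 * (g x * D s x * p x)) integrable_on {a..b}"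
      by (intro integrable_continuous_interval continuous_intros gc pc Dcs)
    have i4: "(\<lambda>x. (D s x)\<^sup>2 * p x) integrable_on {a..b}"
      by (intro integrable_continuous_interval continuous_intros gc pc Dcs)
    have i5: "(\<lambda>x. C\<^sup>2 * s\<^sup>2 * p x) integrable_on {a..b}"
      by (intro integrable_continuous_interval continuous_intros gc pc Dcs)
    have i3k: "(\<lambda>x. - (2 * (g x * D s x * p x))) integrable_on {k1..k2}"
      by (intro integrable_continuous_interval continuous_intros continuous_on_subset[OF gc k(2)]
          continuous_on_subset[OF pc k(2)] continuous_on_subset[OF Dcs k(2)])
    have i3k': "(\<lambda>x. - (2 * (g x * D s x * p x))) integrable_on {a..b}"
      using i3 integrable_neg by blast
    have "\<phi> (t0 + \<sigma> * s) - \<phi> t0 = integral {a..b} (\<lambda>x. (g x + D s x)\<^sup>2 * p x - (g x)\<^sup>2 * p x)"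
      using phis phi0 s integral_diff[OF i1 i2] by auto
    also have "\<dots> = integral {a..b} (\<lambda>x. 2 * (g x * D s x * p x) + (D s x)\<^sup>2 * p x)"
      by (rule integral_cong) (simp add: power2_eq_square algebra_simps)
    also have "\<dots> = integral {a..b} (\<lambda>x. 2 * (g x * D s x * p x)) + integral {a..b} (\<lambda>x. (D s x)\<^sup>2 * p x)"
      using integral_add[OF i3 i4] by simp
    also have "integral {a..b} (\<lambda>x. 2 * (g x * D s x * p x)) \<le> - 2 * m * s * L"
    proof -
      have "integral {k1..k2} (\<lambda>x. - (2 * (g x * D s x * p x))) \<le> integral {a..b} (\<lambda>x. - (2 * (g x * D s x * p x)))"
      proof (rule integral_subset_le[OF k(2) i3k i3k'], intro ballI)
        fix x assume x: "x \<in> {a..b}"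
        have "g x * D s x * p x \<le> 0" using sgn s x by blast
        then show "0 \<le> - (2 * (g x * D s x * p x))" by linarith
      qed
      moreover have "integral {k1..k2} (\<lambda>x. 2 * m * s) \<le> integral {k1..k2} (\<lambda>x. - (2 * (g x * D s x * p x)))"
      proof (rule integral_le[OF _ i3k])
        fix x assume x: "x \<in> {k1..k2}"
        have "g x * D s x * p x \<le> - m * s" using kb s x by blast
        then show "2 * m * s \<le> - (2 * (g x * D s x * p x))" by linarith
      qed (rule integrable_const_ivl)
      moreover have "integral {k1..k2} (\<lambda>x. 2 * m * s) = 2 * m * s * L"
        using k(1) unfolding L_def by simp
      moreover have "integral {a..b} (\<lambda>x. - (2 * (g x * D s x * p x))) = - integral {a..b} (\<lambda>x. 2 * (g x * D s x * p x))"
        by (rule integral_neg)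
      ultimately show ?thesis by linarith
    qed
    also have "integral {a..b} (\<lambda>x. (D s x)\<^sup>2 * p x) \<le> integral {a..b} (\<lambda>x. C\<^sup>2 * s\<^sup>2 * p x)"
    proof (rule integral_le[OF i4 i5])
      fix x assume x: "x \<in> {a..b}"
      have "\<bar>D s x\<bar> \<le> C * s" using Db s x by auto
      then have "\<bar>D s x\<bar> \<le> \<bar>C * s\<bar>" by linarith
      then have "(D s x)\<^sup>2 \<le> (C * s)\<^sup>2"
        using abs_le_square_iff by blast
      then show "(D s x)\<^sup>2 * p x \<le> C\<^sup>2 * s\<^sup>2 * p x"
        using pn x by (simp add: mult_right_mono power_mult_distrib)
    qed
    also have "integral {a..b} (\<lambda>x. C\<^sup>2 * s\<^sup>2 * p x) = C\<^sup>2 * s\<^sup>2 * P"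
      unfolding P_def by simp
    finally show ?thesis by simp
  qed
  obtain \<delta> where d: "\<delta> > 0" "\<forall>y. y \<noteq> t0 \<and> \<bar>y - t0\<bar> < \<delta> \<longrightarrow> \<bar>\<phi> y - \<phi> t0\<bar> \<le> (m * L) * \<bar>y - t0\<bar>"
    using deriv_small[OF der, of "m * L"] m L by auto
  define s where "s = min (min (s0/2) (\<delta>/2)) (m * L / (C\<^sup>2 * P + 1))"
  have CP: "C\<^sup>2 * P \<ge> 0" using P by simp
  have mL: "m * L > 0" using m L by simp
  have s_pos: "s > 0" using s0 d(1) mL CP unfolding s_def by auto
  have s_lt: "s < s0" "s < \<delta>" using s0 d(1) unfolding s_def by auto
  have s_le: "s \<le> m * L / (C\<^sup>2 * P + 1)" unfolding s_def by auto
  have ys: "\<bar>(t0 + \<sigma> * s) - t0\<bar> = s" using sig s_pos by (simp add: abs_mult)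
  have "\<bar>\<phi> (t0 + \<sigma> * s) - \<phi> t0\<bar> \<le> (m * L) * s"
    using d(2)[rule_format, of "t0 + \<sigma> * s"] ys s_lt s_pos sig by auto
  moreover have "\<phi> (t0 + \<sigma> * s) - \<phi> t0 \<le> - 2 * m * s * L + C\<^sup>2 * s\<^sup>2 * P"
    using key[of s] s_pos s_lt by auto
  ultimately have "m * L * s \<le> C\<^sup>2 * P * s * s" by (simp add: power2_eq_square algebra_simps)
  then have "m * L \<le> C\<^sup>2 * P * s" using s_pos by (simp add: mult.commute)
  moreover have "C\<^sup>2 * P * s \<le> C\<^sup>2 * P * (m * L / (C\<^sup>2 * P + 1))"
    using mult_left_mono[OF s_le CP] by simp
  moreover have "C\<^sup>2 * P * (m * L / (C\<^sup>2 * P + 1)) < m * L"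
    using CP mL by (simp add: field_simps)
  ultimately show False by linarith
qed


lemma clip_mono: "x \<le> y \<Longrightarrow> clip x \<le> clip y"
  unfolding clip_def by auto
lemma clip_lip: "\<bar>clip x - clip y\<bar> \<le> \<bar>x - y\<bar>"
  unfolding clip_def by auto
lemma clip_0: "x \<le> 0 \<Longrightarrow> clip x = 0"
  unfolding clip_def by auto
lemma clip_1: "x \<ge> 1 \<Longrightarrow> clip x = 1"
  unfolding clip_def by auto
lemma clip_id: "0 \<le> x \<Longrightarrow> x \<le> 1 \<Longrightarrow> clip x = x"
  unfolding clip_def by auto
lemma clip_ge0: "0 \<le> clip x" and clip_le1: "clip x \<le> 1"
  unfolding clip_def by auto

lemma continuous_on_clip [continuous_intros]:
  "continuous_on S F \<Longrightarrow> continuous_on S (\<lambda>x. clip (F x))"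
  unfolding clip_def by (intro continuous_intros)

lemma NN_cont: "continuous_on S (NN h v w \<theta>)"
  unfolding NN_def by (intro continuous_intros)

lemma NN_upd:
  assumes j: "j \<in> {1..h}"
  shows "NN h v w (\<theta>(j := t)) x = NN h v w \<theta> x + v j * (clip (w j * x + t) - clip (w j * x + \<theta> j))"
proof -
  have jj: "j \<noteq> h + 1" using j by auto
  have fin: "finite {1..h}" by simp
  have "(\<Sum>i = 1..h. v i * clip (w i * x + (\<theta>(j := t)) i))
      = v j * clip (w j * x + t) + (\<Sum>i \<in> {1..h} - {j}. v i * clip (w i * x + (\<theta>(j := t)) i))"
    using sum.remove[OF fin j, of "\<lambda>i. v i * clip (w i * x + (\<theta>(j := t)) i)"] by simp
  also have "(\<Sum>i \<in> {1..h} - {j}. v i * clip (w i * x + (\<theta>(j := t)) i))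
      = (\<Sum>i \<in> {1..h} - {j}. v i * clip (w i * x + \<theta> i))"
    by (rule sum.cong) auto
  also have "(\<Sum>i \<in> {1..h} - {j}. v i * clip (w i * x + \<theta> i))
      = (\<Sum>i = 1..h. v i * clip (w i * x + \<theta> i)) - v j * clip (w j * x + \<theta> j)"
    using sum.remove[OF fin j, of "\<lambda>i. v i * clip (w i * x + \<theta> i)"] by simp
  finally show ?thesis unfolding NN_def using jj by (simp add: algebra_simps)
qed

lemma NN_upd_bias:
  "NN h v w (\<theta>(h + 1 := t)) x = NN h v w \<theta> x + (t - \<theta> (h + 1))"
proof -
  have "(\<Sum>i = 1..h. v i * clip (w i * x + (\<theta>(h + 1 := t)) i)) = (\<Sum>i = 1..h. v i * clip (w i * x + \<theta> i))"
    by (rule sum.cong) auto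
  then show ?thesis unfolding NN_def by simp
qed

lemma pos_nbhd:
  fixes q :: "real \<Rightarrow> real"
  assumes qc: "continuous_on UNIV q" and U: "open U" "y0 \<in> U" and q0: "q y0 > 0"
  shows "\<exists>k1 k2. k1 < k2 \<and> {k1..k2} \<subseteq> U \<and> (\<forall>x\<in>{k1..k2}. q x \<ge> q y0 / 2)"
proof -
  have "isCont q y0" using qc by (simp add: continuous_on_eq_continuous_at)
  then obtain \<delta> where d: "\<delta> > 0" "\<forall>x. \<bar>x - y0\<bar> < \<delta> \<longrightarrow> \<bar>q x - q y0\<bar> < q y0 / 2"
    using q0 unfolding continuous_at_eps_delta dist_real_def by (metis half_gt_zero)
  obtain \<epsilon> where e: "\<epsilon> > 0" "ball y0 \<epsilon> \<subseteq> U" using U open_contains_ball by blast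
  define r where "r = min \<delta> \<epsilon> / 2"
  have r: "r > 0" "r < \<delta>" "r < \<epsilon>" using d e unfolding r_def by auto
  show ?thesis
  proof (intro exI conjI)
    show "y0 - r < y0 + r" using r by simp
    show "{y0 - r..y0 + r} \<subseteq> U"
    proof
      fix x assume "x \<in> {y0 - r..y0 + r}"
      then have "dist y0 x < \<epsilon>" using r by (auto simp: dist_real_def)
      then show "x \<in> U" using e by auto
    qed
    show "\<forall>x\<in>{y0 - r..y0 + r}. q y0 / 2 \<le> q x"
    proof
      fix x assume "x \<in> {y0 - r..y0 + r}"
      then have "\<bar>x - y0\<bar> < \<delta>" using r by auto
      then have "\<bar>q x - q y0\<bar> < q y0 / 2" using d by blast
      then show "q y0 / 2 \<le> q x" by linarith
    qed
  qed
qed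

lemma psi_iff:
  assumes "w j > 0"
  shows "(psi w \<theta> j < x \<longleftrightarrow> 0 < w j * x + \<theta> j)" "(x < psi w \<theta> j + 1 / w j \<longleftrightarrow> w j * x + \<theta> j < 1)"
  using assms unfolding psi_def by (auto simp: field_simps)



context
  fixes a b :: real and h :: nat and v w :: "nat \<Rightarrow> real"
    and f p :: "real \<Rightarrow> real" and \<theta> :: "nat \<Rightarrow> real"
  assumes ab: "a < b"
    and vpos: "\<forall>i \<in> {1..h}. v i > 0"
    and wpos: "\<forall>i \<in> {1..h}. w i > 0"
    and fcont: "continuous_on UNIV f"
    and pcont: "continuous_on UNIV p"
    and pnonneg: "\<forall>x. p x \<ge> 0"
    and psupp: "{x. p x > 0} = {a<..<b}"
    and crit: "grad_zero h (LL a b h v w f p) \<theta>"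
begin

lemma p_out: "x \<notin> {a<..<b} \<Longrightarrow> p x = 0"
  using psupp pnonneg by (metis mem_Collect_eq order_le_less)

lemma p_in: "x \<in> {a<..<b} \<Longrightarrow> p x > 0"
  using psupp by blast

lemma g_cont: "continuous_on S (\<lambda>x. NN h v w \<theta> x - f x)"
  by (intro continuous_intros NN_cont continuous_on_subset[OF fcont]) auto

lemma pc: "continuous_on S p"
  using continuous_on_subset[OF pcont] by auto

lemma LL_upd: "j \<in> {1..h} \<Longrightarrow> LL a b h v w f p (\<theta>(j := t)) =
   integral {a..b} (\<lambda>x. ((NN h v w \<theta> x - f x) + v j * (clip (w j * x + t) - clip (w j * x + \<theta> j)))\<^sup>2 * p x)"
  unfolding LL_def by (simp add: NN_upd algebra_simps)

lemma LL_upd_bias: "LL a b h v w f p (\<theta>(h + 1 := t)) =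
   integral {a..b} (\<lambda>x. ((NN h v w \<theta> x - f x) + (t - \<theta> (h + 1)))\<^sup>2 * p x)"
  unfolding LL_def NN_upd_bias by (simp add: algebra_simps)

lemma LL_0: "LL a b h v w f p \<theta> = integral {a..b} (\<lambda>x. (NN h v w \<theta> x - f x)\<^sup>2 * p x)"
  unfolding LL_def by simp

lemma der: "j \<in> {1..h+1} \<Longrightarrow> ((\<lambda>t. LL a b h v w f p (\<theta>(j := t))) has_real_derivative 0) (at (\<theta> j))"
  using crit unfolding grad_zero_def by blast

lemma pn: "\<forall>x\<in>{a..b}. p x \<ge> 0" using pnonneg by auto

lemma Iset_open: "open (Iset a b w \<theta> i)"
  unfolding Iset_def by (intro open_Int open_greaterThanLessThan)

lemma gp_cont: "continuous_on UNIV (\<lambda>x. (NN h v w \<theta> x - f x) * p x)"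
  by (intro continuous_intros g_cont pc)

lemma ngp_cont: "continuous_on UNIV (\<lambda>x. - ((NN h v w \<theta> x - f x) * p x))"
  by (intro continuous_intros g_cont pc)


lemma exists_right:
  "\<exists>y\<in>{a<..<b}. NN h v w \<theta> y - f y \<le> 0 \<and> (\<forall>j\<in>{1..h}. Iset a b w \<theta> j \<noteq> {} \<longrightarrow> psi w \<theta> j < y)"
proof (rule ccontr)
  assume nc: "\<not> ?thesis"
  define J where "J = {j\<in>{1..h}. Iset a b w \<theta> j \<noteq> {}}"
  define g where "g = (\<lambda>x. NN h v w \<theta> x - f x)"
  have gc: "continuous_on {a..b} g" unfolding g_def by (rule g_cont)
  have pcab: "continuous_on {a..b} p" by (rule pc)
  show False
  proof (cases "J = {}")
    case True
    have gpos: "\<forall>y\<in>{a<..<b}. g y > 0" using nc True unfolding J_def g_def by force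
    define y0 where "y0 = (a + b) / 2"
    have y0: "y0 \<in> {a<..<b}" using ab unfolding y0_def by auto
    define q0 where "q0 = g y0 * p y0"
    have q0: "q0 > 0" unfolding q0_def using gpos y0 p_in by auto
    obtain k1 k2 where k: "k1 < k2" "{k1..k2} \<subseteq> {a<..<b}" "\<forall>x\<in>{k1..k2}. g x * p x \<ge> q0 / 2"
      using pos_nbhd[OF gp_cont open_greaterThanLessThan y0] q0 unfolding q0_def g_def by auto
    have k2: "{k1..k2} \<subseteq> {a..b}" using k(2) by auto
    have d: "((\<lambda>t. LL a b h v w f p (\<theta>(h+1 := t))) has_real_derivative 0) (at (\<theta> (h+1)))"
      by (rule der) auto
    have sig: "\<bar>(-1::real)\<bar> = 1" by simp
    have s0: "(1::real) > 0" by simp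
    have Dc: "\<forall>s\<in>{0<..<1::real}. continuous_on {a..b} ((\<lambda>s x. - s) s)" by auto
    have phis: "\<forall>s\<in>{0<..<1::real}. (\<lambda>t. LL a b h v w f p (\<theta>(h+1 := t))) (\<theta> (h+1) + (-1) * s)
        = integral {a..b} (\<lambda>x. (g x + (\<lambda>s x. - s) s x)\<^sup>2 * p x)"
      unfolding LL_upd_bias g_def by simp
    have phi0: "(\<lambda>t. LL a b h v w f p (\<theta>(h+1 := t))) (\<theta> (h+1)) = integral {a..b} (\<lambda>x. (g x)\<^sup>2 * p x)"
      unfolding g_def by (simp add: LL_0)
    have Db: "\<forall>s\<in>{0<..<1::real}. \<forall>x\<in>{a..b}. \<bar>(\<lambda>s x. - s) s x\<bar> \<le> 1 * s" by auto
    have sgn: "\<forall>s\<in>{0<..<1::real}. \<forall>x\<in>{a..b}. g x * (\<lambda>s x. - s) s x * p x \<le> 0"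
    proof (intro ballI)
      fix s x assume s: "s \<in> {0<..<1::real}" and x: "x \<in> {a..b}"
      show "g x * (\<lambda>s x. - s) s x * p x \<le> 0"
      proof (cases "x \<in> {a<..<b}")
        case True
        then have "g x > 0" "p x > 0" using gpos p_in by auto
        then show ?thesis using s by (simp add: mult_pos_pos)
      next
        case False
        then show ?thesis using p_out by simp
      qed
    qed
    have m: "q0 / 2 > 0" using q0 by simp
    have kb: "\<forall>s\<in>{0<..<1::real}. \<forall>x\<in>{k1..k2}. g x * (\<lambda>s x. - s) s x * p x \<le> - (q0 / 2) * s"
    proof (intro ballI)
      fix s x assume s: "s \<in> {0<..<1::real}" and x: "x \<in> {k1..k2}"
      have "g x * p x \<ge> q0 / 2" using k(3) x by auto
      then have "s * (q0 / 2) \<le> s * (g x * p x)" using s by (intro mult_left_mono) auto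
      then show "g x * (\<lambda>s x. - s) s x * p x \<le> - (q0 / 2) * s" by (simp add: algebra_simps)
    qed
    show False by (rule core[OF ab gc pcab pn d sig s0 Dc phis phi0 Db sgn k(1) k2 m kb])
  next
    case False
    have finJ: "finite J" unfolding J_def by simp
    define M where "M = Max (psi w \<theta> ` J)"
    have "M \<in> psi w \<theta> ` J" unfolding M_def using False finJ by simp
    then obtain i where i: "i \<in> J" "psi w \<theta> i = M" by auto
    have imax: "\<forall>j\<in>J. psi w \<theta> j \<le> psi w \<theta> i" using i finJ unfolding M_def by simp
    have ih: "i \<in> {1..h}" using i unfolding J_def by auto
    have wi: "w i > 0" and vi: "v i > 0" using ih wpos vpos by auto
    have gpos: "\<forall>y\<in>{a<..<b}. psi w \<theta> i < y \<longrightarrow> g y > 0"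
    proof (intro ballI impI)
      fix y assume y: "y \<in> {a<..<b}" "psi w \<theta> i < y"
      have "\<forall>j\<in>{1..h}. Iset a b w \<theta> j \<noteq> {} \<longrightarrow> psi w \<theta> j < y"
        using imax y(2) unfolding J_def by force
      then show "g y > 0" using nc y(1) unfolding g_def by force
    qed
    obtain y0 where y0: "y0 \<in> Iset a b w \<theta> i" using i unfolding J_def by auto
    have y0ab: "y0 \<in> {a<..<b}" and y0p: "psi w \<theta> i < y0" using y0 unfolding Iset_def by auto
    define q0 where "q0 = g y0 * p y0"
    have q0: "q0 > 0" unfolding q0_def using gpos y0ab y0p p_in by auto
    obtain k1 k2 where k: "k1 < k2" "{k1..k2} \<subseteq> Iset a b w \<theta> i" "\<forall>x\<in>{k1..k2}. g x * p x \<ge> q0 / 2"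
      using pos_nbhd[OF gp_cont Iset_open y0] q0 unfolding q0_def g_def by auto
    have kI: "x \<in> {a<..<b} \<and> 0 < w i * x + \<theta> i \<and> w i * x + \<theta> i < 1" if x: "x \<in> {k1..k2}" for x
    proof -
      have "x \<in> Iset a b w \<theta> i" using k(2) x by blast
      then have "x \<in> {a<..<b}" "psi w \<theta> i < x" "x < psi w \<theta> i + 1 / w i" unfolding Iset_def by auto
      then show ?thesis using psi_iff[of w i, OF wi] by simp
    qed
    have k2: "{k1..k2} \<subseteq> {a..b}" using kI by fastforce
    define \<alpha> where "\<alpha> = w i * k1 + \<theta> i"
    have \<alpha>: "\<alpha> > 0" unfolding \<alpha>_def using kI[of k1] k(1) by auto
    define D where "D = (\<lambda>s x. v i * (clip (w i * x + (\<theta> i + (-1) * s)) - clip (w i * x + \<theta> i)))"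
    have d: "((\<lambda>t. LL a b h v w f p (\<theta>(i := t))) has_real_derivative 0) (at (\<theta> i))"
      by (rule der) (use ih in auto)
    have sig: "\<bar>(-1::real)\<bar> = 1" by simp
    have Dc: "\<forall>s\<in>{0<..<\<alpha>}. continuous_on {a..b} (D s)" unfolding D_def by (intro ballI continuous_intros)
    have phis: "\<forall>s\<in>{0<..<\<alpha>}. (\<lambda>t. LL a b h v w f p (\<theta>(i := t))) (\<theta> i + (-1) * s)
        = integral {a..b} (\<lambda>x. (g x + D s x)\<^sup>2 * p x)"
      unfolding LL_upd[OF ih] g_def D_def by simp
    have phi0: "(\<lambda>t. LL a b h v w f p (\<theta>(i := t))) (\<theta> i) = integral {a..b} (\<lambda>x. (g x)\<^sup>2 * p x)"
      unfolding g_def by (simp add: LL_0)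
    have Db: "\<forall>s\<in>{0<..<\<alpha>}. \<forall>x\<in>{a..b}. \<bar>D s x\<bar> \<le> v i * s"
    proof (intro ballI)
      fix s x assume s: "s \<in> {0<..<\<alpha>}" and x: "x \<in> {a..b}"
      have "\<bar>clip (w i * x + (\<theta> i + (-1) * s)) - clip (w i * x + \<theta> i)\<bar> \<le> s"
        using clip_lip[of "w i * x + (\<theta> i + (-1) * s)" "w i * x + \<theta> i"] s by simp
      then show "\<bar>D s x\<bar> \<le> v i * s" unfolding D_def using vi
        by (simp add: abs_mult mult_left_mono)
    qed
    have sgn: "\<forall>s\<in>{0<..<\<alpha>}. \<forall>x\<in>{a..b}. g x * D s x * p x \<le> 0"
    proof (intro ballI)
      fix s x assume s: "s \<in> {0<..<\<alpha>}" and x: "x \<in> {a..b}"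
      show "g x * D s x * p x \<le> 0"
      proof (cases "x \<in> {a<..<b}")
        case True
        show ?thesis
        proof (cases "psi w \<theta> i < x")
          case True
          then have gx: "g x > 0" using gpos \<open>x \<in> {a<..<b}\<close> by auto
          have "clip (w i * x + (\<theta> i + (-1) * s)) \<le> clip (w i * x + \<theta> i)"
            using s by (intro clip_mono) auto
          then have "D s x \<le> 0" unfolding D_def using vi by (simp add: mult_nonneg_nonpos)
          then have "g x * D s x \<le> 0" using gx by (simp add: mult_nonneg_nonpos)
          then show ?thesis using pnonneg by (simp add: mult_nonpos_nonneg)
        next
          case False
          then have "w i * x + \<theta> i \<le> 0" using psi_iff[of w i, OF wi] by (meson not_less)
          then have "D s x = 0" unfolding D_def using s by (simp add: clip_0)
          then show ?thesis by simp
        qed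
      next
        case False
        then show ?thesis using p_out by simp
      qed
    qed
    have m: "v i * (q0 / 2) > 0" using q0 vi by simp
    have kb: "\<forall>s\<in>{0<..<\<alpha>}. \<forall>x\<in>{k1..k2}. g x * D s x * p x \<le> - (v i * (q0 / 2)) * s"
    proof (intro ballI)
      fix s x assume s: "s \<in> {0<..<\<alpha>}" and x: "x \<in> {k1..k2}"
      have xi: "0 < w i * x + \<theta> i" "w i * x + \<theta> i < 1" using kI[OF x] by auto
      have "w i * k1 \<le> w i * x" using x wi by (intro mult_left_mono) auto
      then have "w i * x + \<theta> i \<ge> \<alpha>" unfolding \<alpha>_def by simp
      then have "clip (w i * x + (\<theta> i + (-1) * s)) = w i * x + \<theta> i - s"
        using s xi by (subst clip_id) auto
      moreover have "clip (w i * x + \<theta> i) = w i * x + \<theta> i" using xi by (simp add: clip_id)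
      ultimately have Dx: "D s x = - (v i * s)" unfolding D_def by simp
      have "g x * p x \<ge> q0 / 2" using k(3) x by auto
      then have "(v i * s) * (q0 / 2) \<le> (v i * s) * (g x * p x)" using s vi by (intro mult_left_mono) auto
      then show "g x * D s x * p x \<le> - (v i * (q0 / 2)) * s" unfolding Dx by (simp add: algebra_simps)
    qed
    show False by (rule core[OF ab gc pcab pn d sig \<alpha> Dc phis phi0 Db sgn k(1) k2 m kb])
  qed
qed

lemma exists_left:
  "\<exists>y\<in>{a<..<b}. NN h v w \<theta> y - f y \<ge> 0 \<and> (\<forall>j\<in>{1..h}. Iset a b w \<theta> j \<noteq> {} \<longrightarrow> y < psi w \<theta> j + 1 / w j)"
proof (rule ccontr)
  assume nc: "\<not> ?thesis"
  define J where "J = {j\<in>{1..h}. Iset a b w \<theta> j \<noteq> {}}"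
  define g where "g = (\<lambda>x. NN h v w \<theta> x - f x)"
  have gc: "continuous_on {a..b} g" unfolding g_def by (rule g_cont)
  have pcab: "continuous_on {a..b} p" by (rule pc)
  show False
  proof (cases "J = {}")
    case True
    have gneg: "\<forall>y\<in>{a<..<b}. g y < 0" using nc True unfolding J_def g_def by force
    define y0 where "y0 = (a + b) / 2"
    have y0: "y0 \<in> {a<..<b}" using ab unfolding y0_def by auto
    define q0 where "q0 = - (g y0 * p y0)"
    have q0: "q0 > 0" unfolding q0_def using gneg y0 p_in by (simp add: mult_neg_pos)
    obtain k1 k2 where k: "k1 < k2" "{k1..k2} \<subseteq> {a<..<b}" "\<forall>x\<in>{k1..k2}. - (g x * p x) \<ge> q0 / 2"
      using pos_nbhd[OF ngp_cont open_greaterThanLessThan y0] q0 unfolding q0_def g_def by auto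
    have k2: "{k1..k2} \<subseteq> {a..b}" using k(2) by auto
    have d: "((\<lambda>t. LL a b h v w f p (\<theta>(h+1 := t))) has_real_derivative 0) (at (\<theta> (h+1)))"
      by (rule der) auto
    have sig: "\<bar>(1::real)\<bar> = 1" by simp
    have s0: "(1::real) > 0" by simp
    have Dc: "\<forall>s\<in>{0<..<1::real}. continuous_on {a..b} ((\<lambda>s x. s) s)" by auto
    have phis: "\<forall>s\<in>{0<..<1::real}. (\<lambda>t. LL a b h v w f p (\<theta>(h+1 := t))) (\<theta> (h+1) + 1 * s)
        = integral {a..b} (\<lambda>x. (g x + (\<lambda>s x. s) s x)\<^sup>2 * p x)"
      unfolding LL_upd_bias g_def by simp
    have phi0: "(\<lambda>t. LL a b h v w f p (\<theta>(h+1 := t))) (\<theta> (h+1)) = integral {a..b} (\<lambda>x. (g x)\<^sup>2 * p x)"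
      unfolding g_def by (simp add: LL_0)
    have Db: "\<forall>s\<in>{0<..<1::real}. \<forall>x\<in>{a..b}. \<bar>(\<lambda>s x. s) s x\<bar> \<le> 1 * s" by auto
    have sgn: "\<forall>s\<in>{0<..<1::real}. \<forall>x\<in>{a..b}. g x * (\<lambda>s x. s) s x * p x \<le> 0"
    proof (intro ballI)
      fix s x assume s: "s \<in> {0<..<1::real}" and x: "x \<in> {a..b}"
      show "g x * (\<lambda>s x. s) s x * p x \<le> 0"
      proof (cases "x \<in> {a<..<b}")
        case True
        then have "g x < 0" "p x > 0" using gneg p_in by auto
        then have "g x * s < 0" using s by (simp add: mult_neg_pos)
        then show ?thesis using \<open>p x > 0\<close> by (simp add: mult_neg_pos less_imp_le)
      next
        case False
        then show ?thesis using p_out by simp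
      qed
    qed
    have m: "q0 / 2 > 0" using q0 by simp
    have kb: "\<forall>s\<in>{0<..<1::real}. \<forall>x\<in>{k1..k2}. g x * (\<lambda>s x. s) s x * p x \<le> - (q0 / 2) * s"
    proof (intro ballI)
      fix s x assume s: "s \<in> {0<..<1::real}" and x: "x \<in> {k1..k2}"
      have "- (g x * p x) \<ge> q0 / 2" using k(3) x by auto
      then have "s * (q0 / 2) \<le> s * (- (g x * p x))" using s by (intro mult_left_mono) auto
      then show "g x * (\<lambda>s x. s) s x * p x \<le> - (q0 / 2) * s" by (simp add: algebra_simps)
    qed
    show False by (rule core[OF ab gc pcab pn d sig s0 Dc phis phi0 Db sgn k(1) k2 m kb])
  next
    case False
    have finJ: "finite J" unfolding J_def by simp
    define r where "r = (\<lambda>j. psi w \<theta> j + 1 / w j)"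
    define M where "M = Min (r ` J)"
    have "M \<in> r ` J" unfolding M_def using False finJ by simp
    then obtain i where i: "i \<in> J" "r i = M" by auto
    have imin: "\<forall>j\<in>J. r i \<le> r j" using i finJ unfolding M_def by simp
    have ih: "i \<in> {1..h}" using i unfolding J_def by auto
    have wi: "w i > 0" and vi: "v i > 0" using ih wpos vpos by auto
    have gneg: "\<forall>y\<in>{a<..<b}. y < r i \<longrightarrow> g y < 0"
    proof (intro ballI impI)
      fix y assume y: "y \<in> {a<..<b}" "y < r i"
      have "\<forall>j\<in>{1..h}. Iset a b w \<theta> j \<noteq> {} \<longrightarrow> y < psi w \<theta> j + 1 / w j"
        using imin y(2) unfolding J_def r_def by force
      then show "g y < 0" using nc y(1) unfolding g_def by force
    qed
    obtain y0 where y0: "y0 \<in> Iset a b w \<theta> i" using i unfolding J_def by auto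
    have y0ab: "y0 \<in> {a<..<b}" and y0p: "y0 < r i" using y0 unfolding Iset_def r_def by auto
    define q0 where "q0 = - (g y0 * p y0)"
    have q0: "q0 > 0" unfolding q0_def using gneg y0ab y0p p_in by (simp add: mult_neg_pos)
    obtain k1 k2 where k: "k1 < k2" "{k1..k2} \<subseteq> Iset a b w \<theta> i" "\<forall>x\<in>{k1..k2}. - (g x * p x) \<ge> q0 / 2"
      using pos_nbhd[OF ngp_cont Iset_open y0] q0 unfolding q0_def g_def by auto
    have kI: "x \<in> {a<..<b} \<and> 0 < w i * x + \<theta> i \<and> w i * x + \<theta> i < 1" if x: "x \<in> {k1..k2}" for x
    proof -
      have "x \<in> Iset a b w \<theta> i" using k(2) x by blast
      then have "x \<in> {a<..<b}" "psi w \<theta> i < x" "x < psi w \<theta> i + 1 / w i" unfolding Iset_def by auto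
      then show ?thesis using psi_iff[of w i, OF wi] by simp
    qed
    have k2: "{k1..k2} \<subseteq> {a..b}" using kI by fastforce
    define \<alpha> where "\<alpha> = 1 - (w i * k2 + \<theta> i)"
    have \<alpha>: "\<alpha> > 0" unfolding \<alpha>_def using kI[of k2] k(1) by auto
    define D where "D = (\<lambda>s x. v i * (clip (w i * x + (\<theta> i + 1 * s)) - clip (w i * x + \<theta> i)))"
    have d: "((\<lambda>t. LL a b h v w f p (\<theta>(i := t))) has_real_derivative 0) (at (\<theta> i))"
      by (rule der) (use ih in auto)
    have sig: "\<bar>(1::real)\<bar> = 1" by simp
    have Dc: "\<forall>s\<in>{0<..<\<alpha>}. continuous_on {a..b} (D s)" unfolding D_def by (intro ballI continuous_intros)
    have phis: "\<forall>s\<in>{0<..<\<alpha>}. (\<lambda>t. LL a b h v w f p (\<theta>(i := t))) (\<theta> i + 1 * s)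
        = integral {a..b} (\<lambda>x. (g x + D s x)\<^sup>2 * p x)"
      unfolding LL_upd[OF ih] g_def D_def by simp
    have phi0: "(\<lambda>t. LL a b h v w f p (\<theta>(i := t))) (\<theta> i) = integral {a..b} (\<lambda>x. (g x)\<^sup>2 * p x)"
      unfolding g_def by (simp add: LL_0)
    have Db: "\<forall>s\<in>{0<..<\<alpha>}. \<forall>x\<in>{a..b}. \<bar>D s x\<bar> \<le> v i * s"
    proof (intro ballI)
      fix s x assume s: "s \<in> {0<..<\<alpha>}" and x: "x \<in> {a..b}"
      have "\<bar>clip (w i * x + (\<theta> i + 1 * s)) - clip (w i * x + \<theta> i)\<bar> \<le> s"
        using clip_lip[of "w i * x + (\<theta> i + 1 * s)" "w i * x + \<theta> i"] s by simp
      then show "\<bar>D s x\<bar> \<le> v i * s" unfolding D_def using vi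
        by (simp add: abs_mult mult_left_mono)
    qed
    have sgn: "\<forall>s\<in>{0<..<\<alpha>}. \<forall>x\<in>{a..b}. g x * D s x * p x \<le> 0"
    proof (intro ballI)
      fix s x assume s: "s \<in> {0<..<\<alpha>}" and x: "x \<in> {a..b}"
      show "g x * D s x * p x \<le> 0"
      proof (cases "x \<in> {a<..<b}")
        case True
        show ?thesis
        proof (cases "x < r i")
          case True
          then have gx: "g x < 0" using gneg \<open>x \<in> {a<..<b}\<close> by auto
          have "clip (w i * x + \<theta> i) \<le> clip (w i * x + (\<theta> i + 1 * s))"
            using s by (intro clip_mono) auto
          then have "D s x \<ge> 0" unfolding D_def using vi by simp
          then have "g x * D s x \<le> 0" using gx by (simp add: mult_nonpos_nonneg)
          then show ?thesis using pnonneg by (simp add: mult_nonpos_nonneg)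
        next
          case False
          then have "w i * x + \<theta> i \<ge> 1" using psi_iff[of w i, OF wi] unfolding r_def by (meson not_less)
          then have "D s x = 0" unfolding D_def using s by (simp add: clip_1)
          then show ?thesis by simp
        qed
      next
        case False
        then show ?thesis using p_out by simp
      qed
    qed
    have m: "v i * (q0 / 2) > 0" using q0 vi by simp
    have kb: "\<forall>s\<in>{0<..<\<alpha>}. \<forall>x\<in>{k1..k2}. g x * D s x * p x \<le> - (v i * (q0 / 2)) * s"
    proof (intro ballI)
      fix s x assume s: "s \<in> {0<..<\<alpha>}" and x: "x \<in> {k1..k2}"
      have xi: "0 < w i * x + \<theta> i" "w i * x + \<theta> i < 1" using kI[OF x] by auto
      have "w i * x \<le> w i * k2" using x wi by (intro mult_left_mono) auto
      then have "w i * x + \<theta> i \<le> 1 - \<alpha>" unfolding \<alpha>_def by simp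
      then have "clip (w i * x + (\<theta> i + 1 * s)) = w i * x + \<theta> i + s"
        using s xi by (subst clip_id) auto
      moreover have "clip (w i * x + \<theta> i) = w i * x + \<theta> i" using xi by (simp add: clip_id)
      ultimately have Dx: "D s x = v i * s" unfolding D_def by simp
      have "- (g x * p x) \<ge> q0 / 2" using k(3) x by auto
      then have "(v i * s) * (q0 / 2) \<le> (v i * s) * (- (g x * p x))" using s vi by (intro mult_left_mono) auto
      then show "g x * D s x * p x \<le> - (v i * (q0 / 2)) * s" unfolding Dx by (simp add: algebra_simps)
    qed
    show False by (rule core[OF ab gc pcab pn d sig \<alpha> Dc phis phi0 Db sgn k(1) k2 m kb])
  qed
qed

end

lemma term_right:
  assumes wi: "w i > 0" and vi: "v i > 0" and y: "y \<in> {a<..<b}"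
    and J: "Iset a b w \<theta> i \<noteq> {} \<longrightarrow> psi w \<theta> i < y"
  shows "v i * (clip (w i * b + \<theta> i) - clip (w i * y + \<theta> i)) \<le> (if y \<in> Iset a b w \<theta> i then v i else 0)"
proof (cases "y \<in> Iset a b w \<theta> i")
  case True
  have "clip (w i * b + \<theta> i) - clip (w i * y + \<theta> i) \<le> 1" using clip_le1 clip_ge0 by (smt (verit))
  then show ?thesis using True vi mult_left_mono[of _ 1 "v i"] by simp
next
  case False
  have iff: "psi w \<theta> i < x \<longleftrightarrow> 0 < w i * x + \<theta> i" "x < psi w \<theta> i + 1 / w i \<longleftrightarrow> w i * x + \<theta> i < 1" for x
    using psi_iff[of w i, OF wi] by auto
  have yb: "w i * y + \<theta> i < w i * b + \<theta> i" using y wi by simp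
  have "\<not> (psi w \<theta> i < y \<and> y < psi w \<theta> i + 1 / w i)" using False y unfolding Iset_def by auto
  then consider "w i * y + \<theta> i \<ge> 1" | "w i * y + \<theta> i \<le> 0" using iff by force
  then show ?thesis
  proof cases
    case 1
    then show ?thesis using False yb by (simp add: clip_1)
  next
    case 2
    then have py: "y \<le> psi w \<theta> i" using iff[of y] by linarith
    then have E: "Iset a b w \<theta> i = {}" using J by auto
    have "w i * b + \<theta> i \<le> 0"
    proof (rule ccontr)
      assume "\<not> w i * b + \<theta> i \<le> 0"
      then have pb: "psi w \<theta> i < b" using iff[of b] by simp
      have wpos': "1 / w i > 0" using wi by simp
      define m' where "m' = min b (psi w \<theta> i + 1 / w i)"
      have m': "m' > psi w \<theta> i" "m' \<le> b" "m' \<le> psi w \<theta> i + 1 / w i" unfolding m'_def using pb wpos' by auto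
      define x where "x = (psi w \<theta> i + m') / 2"
      have "psi w \<theta> i < x" "x < psi w \<theta> i + 1 / w i" "a < x" "x < b" unfolding x_def using m' py y by auto
      then have "x \<in> Iset a b w \<theta> i" unfolding Iset_def by auto
      then show False using E by auto
    qed
    then show ?thesis using False 2 by (simp add: clip_0)
  qed
qed

lemma term_left:
  assumes wi: "w i > 0" and vi: "v i > 0" and y: "y \<in> {a<..<b}"
    and J: "Iset a b w \<theta> i \<noteq> {} \<longrightarrow> y < psi w \<theta> i + 1 / w i"
  shows "v i * (clip (w i * y + \<theta> i) - clip (w i * a + \<theta> i)) \<le> (if y \<in> Iset a b w \<theta> i then v i else 0)"
proof (cases "y \<in> Iset a b w \<theta> i")
  case True
  have "clip (w i * y + \<theta> i) - clip (w i * a + \<theta> i) \<le> 1" using clip_le1 clip_ge0 by (smt (verit))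
  then show ?thesis using True vi mult_left_mono[of _ 1 "v i"] by simp
next
  case False
  have iff: "psi w \<theta> i < x \<longleftrightarrow> 0 < w i * x + \<theta> i" "x < psi w \<theta> i + 1 / w i \<longleftrightarrow> w i * x + \<theta> i < 1" for x
    using psi_iff[of w i, OF wi] by auto
  have yb: "w i * a + \<theta> i < w i * y + \<theta> i" using y wi by simp
  have "\<not> (psi w \<theta> i < y \<and> y < psi w \<theta> i + 1 / w i)" using False y unfolding Iset_def by auto
  then consider "w i * y + \<theta> i \<ge> 1" | "w i * y + \<theta> i \<le> 0" using iff by force
  then show ?thesis
  proof cases
    case 2
    then show ?thesis using False yb by (simp add: clip_0)
  next
    case 1
    then have py: "psi w \<theta> i + 1 / w i \<le> y" using iff[of y] by linarith
    then have E: "Iset a b w \<theta> i = {}" using J by auto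
    have "w i * a + \<theta> i \<ge> 1"
    proof (rule ccontr)
      assume "\<not> w i * a + \<theta> i \<ge> 1"
      then have pb: "a < psi w \<theta> i + 1 / w i" using iff[of a] by simp
      have wpos': "1 / w i > 0" using wi by simp
      define m' where "m' = max a (psi w \<theta> i)"
      have m': "m' < psi w \<theta> i + 1 / w i" "m' \<ge> a" "m' \<ge> psi w \<theta> i" unfolding m'_def using pb wpos' by auto
      define x where "x = (psi w \<theta> i + 1 / w i + m') / 2"
      have "psi w \<theta> i < x" "x < psi w \<theta> i + 1 / w i" "a < x" "x < b" unfolding x_def using m' py y by auto
      then have "x \<in> Iset a b w \<theta> i" unfolding Iset_def by auto
      then show False using E by auto
    qed
    then show ?thesis using False 1 by (simp add: clip_1)
  qed
qed

theorem corollary2p13: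
  fixes a b :: real and h :: nat and v w :: "nat \<Rightarrow> real"
    and f p :: "real \<Rightarrow> real" and \<theta> :: "nat \<Rightarrow> real"
  assumes ab: "a < b"
    and h: "h \<ge> 1"
    and vpos: "\<forall>i \<in> {1..h}. v i > 0"
    and wpos: "\<forall>i \<in> {1..h}. w i > 0"
    and fcont: "continuous_on UNIV f"
    and pcont: "continuous_on UNIV p"
    and pnonneg: "\<forall>x. p x \<ge> 0"
    and psupp: "{x. p x > 0} = {a<..<b}"
    and fmono: "mono f"
    and flip: "Lip a b f < ereal (Min ((\<lambda>i. v i * w i) ` {1..h}))"
    and crit: "grad_zero h (LL a b h v w f p) \<theta>"
  shows "max (NN h v w \<theta> b - f b) (f a - NN h v w \<theta> a)
           \<le> (SUP x \<in> {a<..<b}. (\<Sum>i \<in> {i \<in> {1..h}. x \<in> Iset a b w \<theta> i}. v i))"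
proof -
  define S where "S = (\<lambda>x. \<Sum>i \<in> {i \<in> {1..h}. x \<in> Iset a b w \<theta> i}. v i)"
  have Seq: "S x = (\<Sum>i = 1..h. if x \<in> Iset a b w \<theta> i then v i else 0)" for x
    unfolding S_def by (rule sum.inter_filter) simp
  have bdd: "bdd_above (S ` {a<..<b})"
  proof (rule bdd_aboveI)
    fix z assume "z \<in> S ` {a<..<b}"
    then obtain x where z: "z = S x" by auto
    have "S x \<le> (\<Sum>i = 1..h. v i)" unfolding S_def
      by (rule sum_mono2) (use vpos in \<open>auto simp: less_imp_le\<close>)
    then show "z \<le> (\<Sum>i = 1..h. v i)" using z by simp
  qed
  have NNdiff: "NN h v w \<theta> x - NN h v w \<theta> y = (\<Sum>i = 1..h. v i * (clip (w i * x + \<theta> i) - clip (w i * y + \<theta> i)))" for x y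
    unfolding NN_def by (simp add: sum_subtractf[symmetric] algebra_simps)
  obtain y1 where y1: "y1 \<in> {a<..<b}" "NN h v w \<theta> y1 - f y1 \<le> 0"
    "\<forall>j\<in>{1..h}. Iset a b w \<theta> j \<noteq> {} \<longrightarrow> psi w \<theta> j < y1"
    using exists_right[OF ab vpos wpos fcont pcont pnonneg psupp crit] by blast
  obtain y2 where y2: "y2 \<in> {a<..<b}" "NN h v w \<theta> y2 - f y2 \<ge> 0"
    "\<forall>j\<in>{1..h}. Iset a b w \<theta> j \<noteq> {} \<longrightarrow> y2 < psi w \<theta> j + 1 / w j"
    using exists_left[OF ab vpos wpos fcont pcont pnonneg psupp crit] by blast
  have R: "NN h v w \<theta> b - f b \<le> S y1"
  proof -
    have "NN h v w \<theta> b - NN h v w \<theta> y1 \<le> S y1"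
      unfolding NNdiff Seq
      by (rule sum_mono, rule term_right[OF _ _ y1(1)]) (use vpos wpos y1(3) in auto)
    moreover have "f y1 \<le> f b" using fmono y1(1) by (auto intro: monoD)
    ultimately show ?thesis using y1(2) by linarith
  qed
  have L: "f a - NN h v w \<theta> a \<le> S y2"
  proof -
    have "NN h v w \<theta> y2 - NN h v w \<theta> a \<le> S y2"
      unfolding NNdiff Seq
      by (rule sum_mono, rule term_left[OF _ _ y2(1)]) (use vpos wpos y2(3) in auto)
    moreover have "f a \<le> f y2" using fmono y2(1) by (auto intro: monoD)
    ultimately show ?thesis using y2(2) by linarith
  qed
  have "S y1 \<le> (SUP x \<in> {a<..<b}. S x)" by (rule cSUP_upper[OF y1(1) bdd])
  moreover have "S y2 \<le> (SUP x \<in> {a<..<b}. S x)" by (rule cSUP_upper[OF y2(1) bdd])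
  ultimately show ?thesis using R L unfolding S_def by simp
qed

end
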